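(* Let $A\in\mathbb{R}^{n\times n}$ with spectral radius $\rho(A)<1$, let $C\in\mathbb{R}^{m\times n}$, and let $Q\in\mathbb{R}^{n\times n}$, $R\in\mathbb{R}^{m\times m}$ be symmetric positive definite, with $(A,C)$ observable and $(A,Q^{1/2})$ controllable. Let $\bar P$ be the unique stabilizing positive definite solution of the discrete-time algebraic Riccati equation $$\bar P = A\bar PA^{\intercal}+Q-(A\bar PA^{\intercal}+Q)C^{\intercal}\big(C(A\bar PA^{\intercal}+Q)C^{\intercal}+R\big)^{-1}C(A\bar PA^{\intercal}+Q),$$ let $P^{OP}=L(A,Q)$ and $P_n=P^{OP}+\bar P$. Let $\gamma^e\in(0,1)$ and $\mu\in(0,1)$. Let $(\lambda^e_k)_{k\ge1}$ be i.i.d. $\{0,1\}$-valued random variables with $\mathbb{P}[\lambda^e_k=0]=\gamma^e$, and let $(u_k)_{k\ge1}$ be i.i.d. $\{0,1\}$-valued random variables with $\mathbb{P}[u_k=0]=\mu$, the two sequences being independent of each other. Let $P^e_0$ be a fixed symmetric positive semidefinite matrix and define recursively, for $k\ge1$, $$P^e_k=\begin{cases}\bar P, & \text{if } (\lambda^e_k,u_k)=(1,1),\\ P_n, & \text{if } (\lambda^e_k,u_k)=(1,0),\\ AP^e_{k-1}A^{\intercal}+Q, & \text{if } \lambda^e_k=0.\end{cases}$$ Then $$\lim_{k\to\infty}\mathbb{E}[P^e_k]=(1-\gamma^e)(1-\mu)\,W^e+\gamma^e S^e+(1-\gamma^e)\mu\,H^e,$$ where $W^e=L(\sqrt{\gamma^e}A,\bar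 P)$, $S^e=L(\sqrt{\gamma^e}A,Q)$ and $H^e=L(\sqrt{\gamma^e}A,P_n)$.
   Context: For a square matrix $T$ with $\rho(T)<1$ and a symmetric matrix $U$, $L(T,U)$ denotes the unique solution $V$ of the discrete-time Lyapunov equation $V=TVT^{\intercal}+U$, equivalently $L(T,U)=\sum_{j=0}^{\infty}T^jU(T^{\intercal})^j$. $P^{OP}=L(A,Q)$ is the open-loop (prediction-only) error covariance of the system $x_{k+1}=Ax_k+w_k$, $\mathrm{Cov}(w_k)=Q$. Here $P^e_k$ models the error covariance of an eavesdropper that receives packets when $\lambda^e_k=1$; a received packet is either the sensor's Kalman estimate (error covariance $\bar P$, when $u_k=1$) or independent noise with covariance $\bar P$ that the eavesdropper mistakes for the estimate (error covariance $P_n$, when $u_k=0$). *)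

theory Defs
  imports "HOL-Analysis.Analysis" "HOL-Probability.Probability"
begin

text \<open>Matrix power with respect to matrix multiplication (the operator ^ on vec types is pointwise).\<close>
primrec matpow :: "real^'n^'n \<Rightarrow> nat \<Rightarrow> real^'n^'n" where
  "matpow A 0 = mat 1"
| "matpow A (Suc k) = A ** matpow A k"

definition cmat :: "real^'n^'m \<Rightarrow> complex^'n^'m" where
  "cmat A = (\<chi> i j. complex_of_real (A $ i $ j))"

definition spectral_radius :: "real^'n^'n \<Rightarrow> real" where
  "spectral_radius A = Max {cmod z | z. \<exists>v::complex^'n. v \<noteq> 0 \<and> cmat A *v v = z *s v}"

definition sym_mat :: "real^'n^'n \<Rightarrow> bool" where
  "sym_mat M \<longleftrightarrow> transpose M = M"

definition pos_def :: "real^'n^'n \<Rightarrow> bool" where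
  "pos_def M \<longleftrightarrow> sym_mat M \<and> (\<forall>x. x \<noteq> 0 \<longrightarrow> x \<bullet> (M *v x) > 0)"

definition pos_semidef :: "real^'n^'n \<Rightarrow> bool" where
  "pos_semidef M \<longleftrightarrow> sym_mat M \<and> (\<forall>x. x \<bullet> (M *v x) \<ge> 0)"

text \<open>Observability of (A,C): the observability matrix [C; CA; ...; CA^(n-1)] has trivial kernel
  (i.e. full column rank n).\<close>
definition observable :: "real^'n^'n \<Rightarrow> real^'n^'m \<Rightarrow> bool" where
  "observable A C \<longleftrightarrow>
     (\<forall>v::real^'n. (\<forall>k<CARD('n). (C ** matpow A k) *v v = 0) \<longrightarrow> v = 0)"

text \<open>Controllability of (A,B): the controllability matrix [B, AB, ..., A^(n-1)B] has full row rank n.\<close>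
definition controllable :: "real^'n^'n \<Rightarrow> real^'p^'n \<Rightarrow> bool" where
  "controllable A B \<longleftrightarrow>
     (\<forall>v::real^'n. (\<forall>k<CARD('n). v v* (matpow A k ** B) = 0) \<longrightarrow> v = 0)"

definition mat_sqrt :: "real^'n^'n \<Rightarrow> real^'n^'n" where
  "mat_sqrt Q = (THE S. pos_semidef S \<and> S ** S = Q)"

text \<open>Solution of the discrete Lyapunov equation V = T V T^T + U, as the series sum_j T^j U (T^T)^j.\<close>
definition lyap :: "real^'n^'n \<Rightarrow> real^'n^'n \<Rightarrow> real^'n^'n" where
  "lyap T U = (\<Sum>j. matpow T j ** U ** transpose (matpow T j))"

definition riccati :: "real^'n^'n \<Rightarrow> real^'n^'m \<Rightarrow> real^'n^'n \<Rightarrow> real^'m^'m \<Rightarrow> real^'n^'n \<Rightarrow> real^'n^'n" where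
  "riccati A C Q R P =
     (let M = A ** P ** transpose A + Q
      in M - M ** transpose C ** matrix_inv (C ** M ** transpose C + R) ** C ** M)"

definition kgain :: "real^'n^'n \<Rightarrow> real^'n^'m \<Rightarrow> real^'n^'n \<Rightarrow> real^'m^'m \<Rightarrow> real^'n^'n \<Rightarrow> real^'m^'n" where
  "kgain A C Q R P =
     (let M = A ** P ** transpose A + Q in M ** transpose C ** matrix_inv (C ** M ** transpose C + R))"

text \<open>Eavesdropper error covariance recursion, driven by sample paths lam, u of the
  {0,1}-valued processes (index k \<ge> 1).\<close>
primrec eav_cov :: "real^'n^'n \<Rightarrow> real^'n^'n \<Rightarrow> real^'n^'n \<Rightarrow> real^'n^'n \<Rightarrow> real^'n^'n
    \<Rightarrow> (nat \<Rightarrow> nat) \<Rightarrow> (nat \<Rightarrow> nat) \<Rightarrow> nat \<Rightarrow> real^'n^'n" where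
  "eav_cov A Q Pbar Pn P0 lam u 0 = P0"
| "eav_cov A Q Pbar Pn P0 lam u (Suc k) =
     (if lam (Suc k) = 1 \<and> u (Suc k) = 1 then Pbar
      else if lam (Suc k) = 1 \<and> u (Suc k) = 0 then Pn
      else A ** eav_cov A Q Pbar Pn P0 lam u k ** transpose A + Q)"

end

theory Submission imports Defs "Jordan_Normal_Form.Spectral_Radius" begin

hide_const (open) Matrix.mat Matrix.vec Spectral_Radius.spectral_radius Matrix.row Matrix.col
no_notation Matrix.vec_index (infixl \<open>$\<close> 100)

definition tmat :: "(nat \<Rightarrow> 'n::finite) \<Rightarrow> complex^'n^'n \<Rightarrow> complex mat" where
  "tmat f X = Matrix.mat CARD('n) CARD('n) (\<lambda>(i,j). X $ f i $ f j)"
definition tvec :: "(nat \<Rightarrow> 'n::finite) \<Rightarrow> complex^'n \<Rightarrow> complex Matrix.vec" where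
  "tvec f x = Matrix.vec CARD('n) (\<lambda>i. x $ f i)"

lemma tmat_dim[simp]: "dim_row (tmat f X) = CARD('n)" "dim_col (tmat f X) = CARD('n)" for f :: "nat \<Rightarrow> 'n::finite"
  by (simp_all add: tmat_def)

lemma tmat_carrier: "tmat f X \<in> carrier_mat CARD('n) CARD('n)" for f :: "nat \<Rightarrow> 'n::finite"
  by (simp add: tmat_def)

lemma tmat_mult:
  fixes f :: "nat \<Rightarrow> 'n::finite"
  assumes bij: "bij_betw f {..<CARD('n)} UNIV"
  shows "tmat f (X ** Y) = tmat f X * tmat f Y"
proof (rule eq_matI)
  fix i j assume i: "i < dim_row (tmat f X * tmat f Y)" and j: "j < dim_col (tmat f X * tmat f Y)"
  hence i': "i < CARD('n)" and j': "j < CARD('n)" by (auto simp: tmat_def)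
  have "(tmat f X * tmat f Y) $$ (i, j) = (\<Sum>l<CARD('n). X $ f i $ f l * Y $ f l $ f j)"
    using i' j' by (simp add: tmat_def scalar_prod_def atLeast0LessThan)
  also have "\<dots> = (\<Sum>l\<in>UNIV. X $ f i $ l * Y $ l $ f j)"
    by (rule sum.reindex_bij_betw[OF bij, where g = "\<lambda>l. X $ f i $ l * Y $ l $ f j"])
  finally show "tmat f (X ** Y) $$ (i, j) = (tmat f X * tmat f Y) $$ (i, j)"
    using i' j' by (simp add: tmat_def matrix_matrix_mult_def)
qed (auto simp: tmat_def)

lemma tmat_one:
  fixes f :: "nat \<Rightarrow> 'n::finite"
  assumes bij: "bij_betw f {..<CARD('n)} UNIV"
  shows "tmat f (mat 1) = 1\<^sub>m CARD('n)"
proof (rule eq_matI)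
  fix i j assume "i < dim_row (1\<^sub>m CARD('n))" "j < dim_col (1\<^sub>m CARD('n) :: complex mat)"
  hence i: "i < CARD('n)" and j: "j < CARD('n)" by auto
  have "f i = f j \<longleftrightarrow> i = j" using bij i j unfolding bij_betw_def inj_on_def by auto
  thus "tmat f (mat 1) $$ (i, j) = 1\<^sub>m CARD('n) $$ (i, j)"
    using i j by (simp add: tmat_def Finite_Cartesian_Product.mat_def)
qed (auto simp: tmat_def)

lemma tmat_mult_vec:
  fixes f :: "nat \<Rightarrow> 'n::finite"
  assumes bij: "bij_betw f {..<CARD('n)} UNIV"
  shows "tmat f X *\<^sub>v tvec f x = tvec f (X *v x)"
proof (rule eq_vecI)
  fix i assume "i < dim_vec (tvec f (X *v x))"
  hence i: "i < CARD('n)" by (simp add: tvec_def)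
  have "vec_index (tmat f X *\<^sub>v tvec f x) i = (\<Sum>l<CARD('n). X $ f i $ f l * x $ f l)"
    using i by (simp add: tmat_def tvec_def mult_mat_vec_def scalar_prod_def atLeast0LessThan)
  also have "\<dots> = (\<Sum>l\<in>UNIV. X $ f i $ l * x $ l)"
    by (rule sum.reindex_bij_betw[OF bij, where g = "\<lambda>l. X $ f i $ l * x $ l"])
  finally show "vec_index (tmat f X *\<^sub>v tvec f x) i = vec_index (tvec f (X *v x)) i"
    using i by (simp add: tvec_def matrix_vector_mult_def)
qed (simp add: tmat_def tvec_def)

lemma cmat_mult: "cmat (X ** Y) = cmat X ** cmat Y"
  by (simp add: cmat_def matrix_matrix_mult_def vec_eq_iff)

lemma cmat_one: "cmat (mat 1 :: real^'n^'n) = mat 1"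
  by (simp add: cmat_def Finite_Cartesian_Product.mat_def Finite_Cartesian_Product.vec_eq_iff fun_eq_iff)

lemma matpow_Suc': "matpow A (Suc k) = matpow A k ** A"
  by (induct k) (simp_all add: matrix_mul_assoc matrix_mul_lid matrix_mul_rid)

lemma tmat_pow:
  fixes f :: "nat \<Rightarrow> 'n::finite" and A :: "real^'n^'n"
  assumes bij: "bij_betw f {..<CARD('n)} UNIV"
  shows "tmat f (cmat (matpow A k)) = tmat f (cmat A) ^\<^sub>m k"
proof (induct k)
  case 0 show ?case using tmat_one[OF bij] by (simp add: cmat_one)
next
  case (Suc k)
  have "tmat f (cmat (matpow A (Suc k))) = tmat f (cmat (matpow A k ** A))"
    by (simp only: matpow_Suc')
  also have "\<dots> = tmat f (cmat A) ^\<^sub>m Suc k" by (simp add: cmat_mult tmat_mult[OF bij] Suc)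
  finally show ?case .
qed

lemma tvec_inj:
  fixes f :: "nat \<Rightarrow> 'n::finite"
  assumes bij: "bij_betw f {..<CARD('n)} UNIV" and eq: "tvec f x = tvec f y"
  shows "x = y"
proof (rule Finite_Cartesian_Product.vec_eq_iff[THEN iffD2], rule allI)
  fix j :: 'n
  obtain i where i: "i < CARD('n)" "j = f i" using bij unfolding bij_betw_def by force
  have "vec_index (tvec f x) i = vec_index (tvec f y) i" using eq by simp
  thus "x $ j = y $ j" using i by (simp add: tvec_def)
qed

lemma tvec_surj:
  fixes f :: "nat \<Rightarrow> 'n::finite"
  assumes bij: "bij_betw f {..<CARD('n)} UNIV" and v: "v \<in> carrier_vec CARD('n)"
  shows "\<exists>x. tvec f x = v"
proof
  let ?g = "the_inv_into {..<CARD('n)} f"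
  show "tvec f (\<chi> j. vec_index v (?g j)) = v"
  proof (rule eq_vecI)
    fix i assume "i < dim_vec v"
    hence i: "i < CARD('n)" using v by simp
    have "?g (f i) = i" using bij i by (simp add: bij_betw_def the_inv_into_f_f)
    thus "vec_index (tvec f (\<chi> j. vec_index v (?g j))) i = vec_index v i" using i by (simp add: tvec_def)
  qed (use v in \<open>simp add: tvec_def\<close>)
qed

lemma tvec_zero: "tvec f 0 = 0\<^sub>v CARD('n)" for f :: "nat \<Rightarrow> 'n::finite"
  by (rule eq_vecI) (simp_all add: tvec_def)

lemma tvec_smult: "tvec f (z *s x) = z \<cdot>\<^sub>v tvec f x" for f :: "nat \<Rightarrow> 'n::finite"
  by (rule eq_vecI) (simp_all add: tvec_def)

lemma tvec_carrier: "tvec f x \<in> carrier_vec CARD('n)" for f :: "nat \<Rightarrow> 'n::finite"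
  by (simp add: tvec_def)

lemma spec_eq:
  fixes f :: "nat \<Rightarrow> 'n::finite" and A :: "real^'n^'n"
  assumes bij: "bij_betw f {..<CARD('n)} UNIV"
  shows "Spectral_Radius.spectral_radius (tmat f (cmat A)) = spectral_radius A"
proof -
  have "norm ` spectrum (tmat f (cmat A)) = {cmod z | z. \<exists>v::complex^'n. v \<noteq> 0 \<and> cmat A *v v = z *s v}"
  proof safe
    fix z assume "z \<in> spectrum (tmat f (cmat A))"
    then obtain w where w: "w \<in> carrier_vec CARD('n)" "w \<noteq> 0\<^sub>v CARD('n)" "tmat f (cmat A) *\<^sub>v w = z \<cdot>\<^sub>v w"
      by (auto simp: spectrum_def eigenvalue_def eigenvector_def tmat_def)
    obtain x where x: "tvec f x = w" using tvec_surj[OF bij w(1)] by blast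
    have "x \<noteq> 0" using w(2) x tvec_zero by metis
    moreover have "cmat A *v x = z *s x"
      using w(3) x tmat_mult_vec[OF bij] tvec_smult tvec_inj[OF bij] by metis
    ultimately show "\<exists>z'. cmod z = cmod z' \<and> (\<exists>v. v \<noteq> 0 \<and> cmat A *v v = z' *s v)" by blast
  next
    fix z and v :: "complex^'n" assume v: "v \<noteq> 0" "cmat A *v v = z *s v"
    have "tvec f v \<noteq> 0\<^sub>v CARD('n)" using v(1) tvec_zero tvec_inj[OF bij] by metis
    moreover have "tmat f (cmat A) *\<^sub>v tvec f v = z \<cdot>\<^sub>v tvec f v"
      using v(2) tmat_mult_vec[OF bij] tvec_smult by metis
    ultimately have "eigenvector (tmat f (cmat A)) (tvec f v) z"
      unfolding eigenvector_def by (simp add: tvec_carrier)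
    hence "z \<in> spectrum (tmat f (cmat A))"
      by (auto simp: spectrum_def eigenvalue_def)
    thus "cmod z \<in> norm ` spectrum (tmat f (cmat A))" by blast
  qed
  thus ?thesis unfolding Spectral_Radius.spectral_radius_def Defs.spectral_radius_def by simp
qed

lemma matpow_entry_bound:
  fixes A :: "real^'n^'n"
  assumes rho: "spectral_radius A < 1"
  shows "\<exists>c. \<forall>k i j. \<bar>matpow A k $ i $ j\<bar> \<le> c"
proof -
  obtain f :: "nat \<Rightarrow> 'n" where bij: "bij_betw f {..<CARD('n)} UNIV"
    using bij_betw_from_nat_into_finite[of "UNIV :: 'n set"] by auto
  have "Spectral_Radius.spectral_radius (tmat f (cmat A)) < 1" using spec_eq[OF bij] rho by simp
  from spectral_radius_jnf_norm_bound_less_1_upper_triangular[OF tmat_carrier this]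
  obtain c where c: "\<And>k. norm_bound (tmat f (cmat A) ^\<^sub>m k) c" by blast
  show ?thesis
  proof (intro exI allI)
    fix k i j
    obtain i' where i': "i' < CARD('n)" "i = f i'" using bij unfolding bij_betw_def by force
    obtain j' where j': "j' < CARD('n)" "j = f j'" using bij unfolding bij_betw_def by force
    have "norm_bound (tmat f (cmat (matpow A k))) c" using c tmat_pow[OF bij] by metis
    hence "norm (tmat f (cmat (matpow A k)) $$ (i', j')) \<le> c"
      using i' j' unfolding norm_bound_def by (simp add: tmat_def)
    thus "\<bar>matpow A k $ i $ j\<bar> \<le> c" using i' j' by (simp add: tmat_def cmat_def)
  qed
qed



lemma matrix_add_rdistrib': "(X + Y) ** Z = X ** Z + Y ** (Z::real^'n^'m)"
  for X Y :: "real^'m^'k"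
  by (simp add: Finite_Cartesian_Product.vec_eq_iff matrix_matrix_mult_def sum.distrib ring_distribs)

lemma norm_mat_le_entries: "norm (X::real^'n^'m) \<le> (\<Sum>i\<in>UNIV. \<Sum>j\<in>UNIV. \<bar>X $ i $ j\<bar>)"
proof -
  have "norm X \<le> (\<Sum>i\<in>UNIV. norm (X $ i))"
    unfolding norm_vec_def by (rule L2_set_le_sum) simp
  also have "\<dots> \<le> (\<Sum>i\<in>UNIV. \<Sum>j\<in>UNIV. \<bar>X $ i $ j\<bar>)"
    by (intro sum_mono norm_le_l1_cart)
  finally show ?thesis .
qed

lemma norm_mat_entry_bound:
  fixes X :: "real^'n^'m"
  assumes "\<And>i j. \<bar>X $ i $ j\<bar> \<le> c"
  shows "norm X \<le> real CARD('m) * real CARD('n) * c"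
proof -
  have "norm X \<le> (\<Sum>i\<in>UNIV. \<Sum>j\<in>UNIV. \<bar>X $ i $ j\<bar>)" by (rule norm_mat_le_entries)
  also have "\<dots> \<le> (\<Sum>i\<in>(UNIV::'m set). \<Sum>j\<in>(UNIV::'n set). c)"
    by (intro sum_mono assms)
  finally show ?thesis by simp
qed

lemma entry_le_norm: "\<bar>(X::real^'n^'m) $ i $ j\<bar> \<le> norm X"
proof -
  have "\<bar>X $ i $ j\<bar> \<le> norm (X $ i)" by (rule component_le_norm_cart)
  also have "\<dots> \<le> norm X" by (rule Finite_Cartesian_Product.norm_nth_le)
  finally show ?thesis .
qed

lemma norm_matmul_le:
  fixes X :: "real^'n^'n" and Y :: "real^'n^'n"
  shows "norm (X ** Y) \<le> real CARD('n) ^ 3 * (norm X * norm Y)"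
proof -
  have "\<bar>(X ** Y) $ i $ j\<bar> \<le> real CARD('n) * (norm X * norm Y)" for i j
  proof -
    have "\<bar>(X ** Y) $ i $ j\<bar> = \<bar>\<Sum>l\<in>UNIV. X $ i $ l * Y $ l $ j\<bar>"
      by (simp add: matrix_matrix_mult_def)
    also have "\<dots> \<le> (\<Sum>l\<in>UNIV. \<bar>X $ i $ l\<bar> * \<bar>Y $ l $ j\<bar>)"
      by (rule order_trans[OF sum_abs]) (simp add: abs_mult)
    also have "\<dots> \<le> (\<Sum>l\<in>(UNIV::'n set). norm X * norm Y)"
      by (intro sum_mono mult_mono entry_le_norm) auto
    finally show ?thesis by simp
  qed
  from norm_mat_entry_bound[OF this] show ?thesis by (simp add: power3_eq_cube mult_ac)
qed

lemma norm_transpose_le: "norm (transpose (X::real^'n^'n)) \<le> real CARD('n) ^ 2 * norm X"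
proof -
  have "\<bar>transpose X $ i $ j\<bar> \<le> norm X" for i j
    by (simp add: transpose_def entry_le_norm)
  from norm_mat_entry_bound[OF this] show ?thesis by (simp add: power2_eq_square)
qed

lemma matpow_scaleR: "matpow (c *\<^sub>R A) j = c ^ j *\<^sub>R matpow A j"
  by (induct j) (simp_all add: matrix_scalar_ac scalar_matrix_assoc[symmetric])

definition Lm :: "real^'n^'n \<Rightarrow> real^'n^'n \<Rightarrow> real^'n^'n" where
  "Lm A X = A ** X ** transpose A"

lemma Lm_add: "Lm A (X + Y) = Lm A X + Lm A Y"
  by (simp add: Lm_def matrix_add_ldistrib matrix_add_rdistrib')

lemma Lm_scaleR: "Lm A (c *\<^sub>R X) = c *\<^sub>R Lm A X"
  by (simp add: Lm_def matrix_scalar_ac scalar_matrix_assoc[symmetric])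

lemma Lm_linear: "linear (Lm A)"
  by (rule linearI) (simp_all add: Lm_add Lm_scaleR)

lemma Lm_bl: "bounded_linear (Lm A)"
  using Lm_linear linear_conv_bounded_linear by blast

lemma Lm_pow: "((\<lambda>X. g *\<^sub>R Lm A X) ^^ k) D = g ^ k *\<^sub>R (matpow A k ** D ** transpose (matpow A k))"
proof (induct k)
  case 0 show ?case by (simp add: matrix_mul_lid matrix_mul_rid transpose_mat)
next
  case (Suc k)
  have "((\<lambda>X. g *\<^sub>R Lm A X) ^^ Suc k) D = g *\<^sub>R Lm A (g ^ k *\<^sub>R (matpow A k ** D ** transpose (matpow A k)))"
    using Suc by simp
  also have "\<dots> = g ^ Suc k *\<^sub>R (matpow A (Suc k) ** D ** transpose (matpow A (Suc k)))"
    by (simp add: Lm_scaleR) (simp add: Lm_def matrix_transpose_mul matrix_mul_assoc)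
  finally show ?case .
qed

lemma lyap_facts:
  fixes A :: "real^'n^'n"
  assumes B: "\<And>k. norm (matpow A k) \<le> B" and g: "0 \<le> g" "g < 1"
  shows "summable (\<lambda>j. matpow (sqrt g *\<^sub>R A) j ** U ** transpose (matpow (sqrt g *\<^sub>R A) j))"
    and "lyap (sqrt g *\<^sub>R A) U = U + g *\<^sub>R Lm A (lyap (sqrt g *\<^sub>R A) U)"
proof -
  let ?K = "real CARD('n) ^ 3" and ?T = "real CARD('n) ^ 2"
  define t where "t j = matpow A j ** U ** transpose (matpow A j)" for j
  have trm: "matpow (sqrt g *\<^sub>R A) j ** U ** transpose (matpow (sqrt g *\<^sub>R A) j) = g ^ j *\<^sub>R t j" for j
  proof -
    have "sqrt g ^ j * sqrt g ^ j = g ^ j"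
      using g by (simp add: power_mult_distrib[symmetric])
    thus ?thesis
      by (simp add: t_def matpow_scaleR transpose_scalar matrix_scalar_ac scalar_matrix_assoc[symmetric])
  qed
  have B0: "0 \<le> B" using order_trans[OF norm_ge_zero B[of 0]] .
  have tb: "norm (t j) \<le> ?K * (?K * B * norm U) * (?T * B)" for j
  proof -
    have "norm (t j) \<le> ?K * (norm (matpow A j ** U) * norm (transpose (matpow A j)))"
      unfolding t_def by (rule norm_matmul_le)
    also have "\<dots> \<le> ?K * ((?K * (norm (matpow A j) * norm U)) * (?T * norm (matpow A j)))"
      by (intro mult_left_mono mult_mono norm_matmul_le norm_transpose_le) auto
    also have "\<dots> \<le> ?K * ((?K * (B * norm U)) * (?T * B))"
      using B0 by (intro mult_left_mono mult_mono B) auto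
    finally show ?thesis by (simp add: mult_ac)
  qed
  define C where "C = ?K * (?K * B * norm U) * (?T * B)"
  have "summable (\<lambda>j. g ^ j *\<^sub>R t j)"
  proof (rule summable_comparison_test[where g = "\<lambda>j. C * g ^ j"])
    show "\<exists>N. \<forall>n\<ge>N. norm (g ^ n *\<^sub>R t n) \<le> C * g ^ n"
    proof (intro exI[of _ 0] allI impI)
      fix n :: nat
      have "norm (g ^ n *\<^sub>R t n) = g ^ n * norm (t n)" using g by simp
      also have "\<dots> \<le> g ^ n * C" using tb[of n] g unfolding C_def by (intro mult_left_mono) auto
      finally show "norm (g ^ n *\<^sub>R t n) \<le> C * g ^ n" by (simp add: mult_ac)
    qed
    show "summable (\<lambda>j. C * g ^ j)" using g by (intro summable_mult summable_geometric) auto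
  qed
  thus S: "summable (\<lambda>j. matpow (sqrt g *\<^sub>R A) j ** U ** transpose (matpow (sqrt g *\<^sub>R A) j))"
    by (simp add: trm)
  have tS: "t (Suc j) = Lm A (t j)" for j
    by (simp add: t_def Lm_def matrix_transpose_mul matrix_mul_assoc)
  have bl: "bounded_linear (\<lambda>X. g *\<^sub>R Lm A X)"
    using Lm_bl bounded_linear_scaleR_right bounded_linear_compose by blast
  have "lyap (sqrt g *\<^sub>R A) U = (\<Sum>j. g ^ j *\<^sub>R t j)" by (simp add: lyap_def trm)
  also have "\<dots> = g ^ 0 *\<^sub>R t 0 + (\<Sum>j. g ^ Suc j *\<^sub>R t (Suc j))"
    using suminf_split_head[OF \<open>summable (\<lambda>j. g ^ j *\<^sub>R t j)\<close>] by simp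
  also have "(\<Sum>j. g ^ Suc j *\<^sub>R t (Suc j)) = (\<Sum>j. g *\<^sub>R Lm A (g ^ j *\<^sub>R t j))"
    by (simp add: tS Lm_scaleR)
  also have "\<dots> = g *\<^sub>R Lm A (\<Sum>j. g ^ j *\<^sub>R t j)"
    using bounded_linear.suminf[OF bl \<open>summable (\<lambda>j. g ^ j *\<^sub>R t j)\<close>] by simp
  also have "(\<Sum>j. g ^ j *\<^sub>R t j) = lyap (sqrt g *\<^sub>R A) U" by (simp add: lyap_def trm)
  finally show "lyap (sqrt g *\<^sub>R A) U = U + g *\<^sub>R Lm A (lyap (sqrt g *\<^sub>R A) U)"
    by (simp add: t_def matrix_mul_lid matrix_mul_rid transpose_mat)
qed




lemma eav_local:
  assumes "\<And>j. 1 \<le> j \<Longrightarrow> j \<le> k \<Longrightarrow> lam j = lam' j \<and> u j = u' j"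
  shows "eav_cov A Q Pb Pn P0 lam u k = eav_cov A Q Pb Pn P0 lam' u' k"
  using assms by (induct k) auto

lemma Lm_cont: "continuous_on UNIV (\<lambda>X. Lm A X + Q)"
  using Lm_linear by (intro continuous_intros linear_continuous_on) (simp add: linear_conv_bounded_linear)

lemma Lm_meas[measurable]: "(\<lambda>X. Lm A X + Q) \<in> borel_measurable borel"
  by (rule borel_measurable_continuous_onI[OF Lm_cont])

lemma meas_G:
  assumes "\<And>j. 1 \<le> j \<Longrightarrow> j \<le> m \<Longrightarrow> Inl j \<in> L \<and> Inr j \<in> L"
  shows "(\<lambda>h. eav_cov A Q Pb Pn P0 (\<lambda>j. h (Inl j)) (\<lambda>j. h (Inr j)) m)
          \<in> borel_measurable (PiM L (\<lambda>_. count_space (UNIV::nat set)))"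
  using assms
proof (induct m)
  case 0 then show ?case by simp
next
  case (Suc m)
  have IH[measurable]: "(\<lambda>h. eav_cov A Q Pb Pn P0 (\<lambda>j. h (Inl j)) (\<lambda>j. h (Inr j)) m)
          \<in> borel_measurable (PiM L (\<lambda>_. count_space (UNIV::nat set)))"
    using Suc by auto
  have [measurable]: "(\<lambda>h. h (Inl (Suc m))) \<in> measurable (PiM L (\<lambda>_. count_space (UNIV::nat set))) (count_space UNIV)"
    using Suc.prems[of "Suc m"] by (intro measurable_component_singleton) auto
  have [measurable]: "(\<lambda>h. h (Inr (Suc m))) \<in> measurable (PiM L (\<lambda>_. count_space (UNIV::nat set))) (count_space UNIV)"
    using Suc.prems[of "Suc m"] by (intro measurable_component_singleton) auto
  have e: "(\<lambda>h. eav_cov A Q Pb Pn P0 (\<lambda>j. h (Inl j)) (\<lambda>j. h (Inr j)) (Suc m)) =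
     (\<lambda>h. if h (Inl (Suc m)) = 1 \<and> h (Inr (Suc m)) = 1 then Pb else if h (Inl (Suc m)) = 1 \<and> h (Inr (Suc m)) = 0 then Pn
          else (\<lambda>X. Lm A X + Q) (eav_cov A Q Pb Pn P0 (\<lambda>j. h (Inl j)) (\<lambda>j. h (Inr j)) m))"
    by (simp add: Lm_def fun_eq_iff)
  show ?case unfolding e by measurable
qed




lemma eav_bound: "\<exists>b. \<forall>lam u. norm (eav_cov A Q Pb Pn P0 lam u k) \<le> b"
proof (induct k)
  case 0 show ?case by (intro exI[of _ "norm P0"]) simp
next
  case (Suc k)
  then obtain b where b: "\<And>lam u. norm (eav_cov A Q Pb Pn P0 lam u k) \<le> b" by blast
  obtain K where K: "K > 0" "\<And>X. norm (Lm A X) \<le> norm X * K"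
    using bounded_linear.pos_bounded[OF Lm_bl[of A]] by blast
  have b0: "0 \<le> b" using order_trans[OF norm_ge_zero b[of undefined undefined]] .
  have bK: "0 \<le> b * K" using b0 K(1) by simp
  define T where "T = norm Pb + norm Pn + (b * K + norm Q)"
  have "norm (eav_cov A Q Pb Pn P0 lam u (Suc k)) \<le> T" for lam u
  proof -
    define E where "E = eav_cov A Q Pb Pn P0 lam u k"
    have n1: "norm (Lm A E + Q) \<le> norm (Lm A E) + norm Q" by (rule norm_triangle_ineq)
    have n2: "norm (Lm A E) \<le> norm E * K" by (rule K(2))
    have n3: "norm E * K \<le> b * K" using b[of lam u] K(1) unfolding E_def by (intro mult_right_mono) auto
    have h1: "norm (A ** E ** transpose A + Q) \<le> T"
      using n1 n2 n3 norm_ge_zero[of Pb] norm_ge_zero[of Pn] unfolding T_def Lm_def by linarith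
    have h2: "norm Pb \<le> T" and h3: "norm Pn \<le> T"
      using bK norm_ge_zero[of Pb] norm_ge_zero[of Pn] norm_ge_zero[of Q] unfolding T_def by linarith+
    show ?thesis using h1 h2 h3 unfolding E_def by (simp only: eav_cov.simps split: if_split) blast
  qed
  thus ?case by blast
qed
lemma exp_step:
  fixes A Q Pb Pn P0 :: "real^'n^'n" and M :: "'a measure" and lam u :: "nat \<Rightarrow> 'a \<Rightarrow> nat"
    and \<gamma> \<mu> :: real
  assumes P: "prob_space M"
    and lam_rv: "\<And>k. k \<ge> 1 \<Longrightarrow> lam k \<in> measurable M (count_space UNIV)"
    and u_rv: "\<And>k. k \<ge> 1 \<Longrightarrow> u k \<in> measurable M (count_space UNIV)"
    and lam_val: "\<And>k \<omega>. k \<ge> 1 \<Longrightarrow> \<omega> \<in> space M \<Longrightarrow> lam k \<omega> \<in> {0, 1}"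
    and u_val: "\<And>k \<omega>. k \<ge> 1 \<Longrightarrow> \<omega> \<in> space M \<Longrightarrow> u k \<omega> \<in> {0, 1}"
    and lam_dist: "\<And>k. k \<ge> 1 \<Longrightarrow> measure M {\<omega> \<in> space M. lam k \<omega> = 0} = \<gamma>"
    and u_dist: "\<And>k. k \<ge> 1 \<Longrightarrow> measure M {\<omega> \<in> space M. u k \<omega> = 0} = \<mu>"
    and indep: "prob_space.indep_vars M (\<lambda>_. count_space UNIV)
                  (\<lambda>i. case i of Inl k \<Rightarrow> lam k | Inr k \<Rightarrow> u k)
                  ({Inl k | k. k \<ge> 1} \<union> {Inr k | k. k \<ge> 1})"
  shows "integral\<^sup>L M (\<lambda>\<omega>. eav_cov A Q Pb Pn P0 (\<lambda>j. lam j \<omega>) (\<lambda>j. u j \<omega>) (Suc k))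
       = ((1-\<gamma>)*(1-\<mu>)) *\<^sub>R Pb + ((1-\<gamma>)*\<mu>) *\<^sub>R Pn
         + \<gamma> *\<^sub>R (Lm A (integral\<^sup>L M (\<lambda>\<omega>. eav_cov A Q Pb Pn P0 (\<lambda>j. lam j \<omega>) (\<lambda>j. u j \<omega>) k)) + Q)"
proof -
  interpret prob_space M by (rule P)
  define X where "X = (\<lambda>i. case i of Inl k \<Rightarrow> lam k | Inr k \<Rightarrow> u k)"
  define I where "I = {Inl k | k. (k::nat) \<ge> 1} \<union> {Inr k | k. (k::nat) \<ge> 1}"
  have ind: "indep_vars (\<lambda>_. count_space UNIV) X I" using indep unfolding X_def I_def .
  have Xm: "X i \<in> measurable M (count_space UNIV)" if "i \<in> I" for i
    using that lam_rv u_rv by (auto simp: X_def I_def)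
  define L where "L = {Inl j | j. 1 \<le> j \<and> j \<le> k} \<union> {Inr j | j. 1 \<le> j \<and> (j::nat) \<le> k}"
  have LI: "L \<subseteq> I" by (auto simp: L_def I_def)
  define G where "G h = eav_cov A Q Pb Pn P0 (\<lambda>j. h (Inl j)) (\<lambda>j. h (Inr j)) k" for h :: "nat + nat \<Rightarrow> nat"
  define Pk where "Pk \<omega> = eav_cov A Q Pb Pn P0 (\<lambda>j. lam j \<omega>) (\<lambda>j. u j \<omega>) k" for \<omega>
  define R where "R \<omega> = restrict (\<lambda>i. X i \<omega>) L" for \<omega>
  have PkG: "Pk = G \<circ> R"
  proof
    fix \<omega>
    show "Pk \<omega> = (G \<circ> R) \<omega>"
      unfolding Pk_def G_def R_def comp_def
      by (rule eav_local) (auto simp: L_def X_def)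
  qed
  have Gm: "G \<in> borel_measurable (PiM L (\<lambda>_. count_space UNIV))"
    unfolding G_def by (rule meas_G) (auto simp: L_def)
  have Rm: "R \<in> measurable M (PiM L (\<lambda>_. count_space UNIV))"
    unfolding R_def using Xm LI by (intro measurable_restrict) auto
  have Pkm: "Pk \<in> borel_measurable M"
    unfolding PkG by (rule measurable_comp[OF Rm Gm])
  obtain b where b: "\<And>lam u. norm (eav_cov A Q Pb Pn P0 lam u k) \<le> b" using eav_bound by blast
  have Pk_int: "integrable M Pk"
    by (rule integrable_const_bound[where B = b]) (auto simp: Pk_def b Pkm)
  define W where "W \<omega> = Lm A (Pk \<omega>) + Q" for \<omega>
  have W_int: "integrable M W" unfolding W_def
    by (rule Bochner_Integration.integrable_add, rule integrable_bounded_linear[OF Lm_bl Pk_int]) simp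
  have EW: "integral\<^sup>L M W = Lm A (integral\<^sup>L M Pk) + Q"
  proof -
    have "integral\<^sup>L M W = integral\<^sup>L M (\<lambda>\<omega>. Lm A (Pk \<omega>)) + integral\<^sup>L M (\<lambda>\<omega>. Q)"
      unfolding W_def by (rule Bochner_Integration.integral_add[OF integrable_bounded_linear[OF Lm_bl Pk_int]]) simp
    also have "integral\<^sup>L M (\<lambda>\<omega>. Lm A (Pk \<omega>)) = Lm A (integral\<^sup>L M Pk)"
      by (rule integral_bounded_linear[OF Lm_bl Pk_int])
    also have "integral\<^sup>L M (\<lambda>\<omega>. Q) = Q" by (simp add: prob_space)
    finally show ?thesis .
  qed
  define S0 where "S0 = {\<omega> \<in> space M. lam (Suc k) \<omega> = 0}"
  define Sa where "Sa = {\<omega> \<in> space M. lam (Suc k) \<omega> = 1 \<and> u (Suc k) \<omega> = 1}"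
  define Sb where "Sb = {\<omega> \<in> space M. lam (Suc k) \<omega> = 1 \<and> u (Suc k) \<omega> = 0}"
  have lrv[measurable]: "lam (Suc k) \<in> measurable M (count_space UNIV)" using lam_rv by simp
  have urv[measurable]: "u (Suc k) \<in> measurable M (count_space UNIV)" using u_rv by simp
  have S0s[measurable]: "S0 \<in> sets M" unfolding S0_def by measurable
  have Sas[measurable]: "Sa \<in> sets M" unfolding Sa_def by measurable
  have Sbs[measurable]: "Sb \<in> sets M" unfolding Sb_def by measurable
  have pw: "eav_cov A Q Pb Pn P0 (\<lambda>j. lam j \<omega>) (\<lambda>j. u j \<omega>) (Suc k)
      = indicator Sa \<omega> *\<^sub>R Pb + indicator Sb \<omega> *\<^sub>R Pn + indicator S0 \<omega> *\<^sub>R W \<omega>" if "\<omega> \<in> space M" for \<omega>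
    using lam_val[of "Suc k" \<omega>] u_val[of "Suc k" \<omega>] that
    by (auto simp: Sa_def Sb_def S0_def W_def Pk_def Lm_def indicator_def)
  have "integral\<^sup>L M (\<lambda>\<omega>. eav_cov A Q Pb Pn P0 (\<lambda>j. lam j \<omega>) (\<lambda>j. u j \<omega>) (Suc k))
     = integral\<^sup>L M (\<lambda>\<omega>. indicator Sa \<omega> *\<^sub>R Pb + indicator Sb \<omega> *\<^sub>R Pn + indicator S0 \<omega> *\<^sub>R W \<omega>)"
    by (rule Bochner_Integration.integral_cong[OF refl pw])
  also have "\<dots> = measure M Sa *\<^sub>R Pb + measure M Sb *\<^sub>R Pn + integral\<^sup>L M (\<lambda>\<omega>. indicator S0 \<omega> *\<^sub>R W \<omega>)"
  proof -
    have ia: "integrable M (\<lambda>\<omega>. indicator Sa \<omega> *\<^sub>R Pb)"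
      by (rule integrable_mult_indicator[OF Sas]) simp
    have ib: "integrable M (\<lambda>\<omega>. indicator Sb \<omega> *\<^sub>R Pn)"
      by (rule integrable_mult_indicator[OF Sbs]) simp
    have ic: "integrable M (\<lambda>\<omega>. indicator S0 \<omega> *\<^sub>R W \<omega>)"
      by (rule integrable_mult_indicator[OF S0s W_int])
    have ea: "integral\<^sup>L M (\<lambda>\<omega>. indicator Sa \<omega> *\<^sub>R Pb) = measure M Sa *\<^sub>R Pb"
    proof -
      have "integrable M (indicator Sa :: 'a \<Rightarrow> real)"
        using Sas by (intro integrable_real_indicator) (simp_all add: less_top[symmetric])
      hence "integral\<^sup>L M (\<lambda>\<omega>. indicator Sa \<omega> *\<^sub>R Pb) = integral\<^sup>L M (indicator Sa :: 'a \<Rightarrow> real) *\<^sub>R Pb"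
        by (intro integral_scaleR_left)
      thus ?thesis using Sas by (simp add: Int_absorb2 sets.sets_into_space)
    qed
    have eb: "integral\<^sup>L M (\<lambda>\<omega>. indicator Sb \<omega> *\<^sub>R Pn) = measure M Sb *\<^sub>R Pn"
    proof -
      have "integrable M (indicator Sb :: 'a \<Rightarrow> real)"
        using Sbs by (intro integrable_real_indicator) (simp_all add: less_top[symmetric])
      hence "integral\<^sup>L M (\<lambda>\<omega>. indicator Sb \<omega> *\<^sub>R Pn) = integral\<^sup>L M (indicator Sb :: 'a \<Rightarrow> real) *\<^sub>R Pn"
        by (intro integral_scaleR_left)
      thus ?thesis using Sbs by (simp add: Int_absorb2 sets.sets_into_space)
    qed
    show ?thesis
      by (simp only: Bochner_Integration.integral_add[OF Bochner_Integration.integrable_add[OF ia ib] ic]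
          Bochner_Integration.integral_add[OF ia ib] ea eb)
  qed
  finally have chain: "integral\<^sup>L M (\<lambda>\<omega>. eav_cov A Q Pb Pn P0 (\<lambda>j. lam j \<omega>) (\<lambda>j. u j \<omega>) (Suc k))
     = measure M Sa *\<^sub>R Pb + measure M Sb *\<^sub>R Pn + integral\<^sup>L M (\<lambda>\<omega>. indicator S0 \<omega> *\<^sub>R W \<omega>)" .
  have lv: "lam (Suc k) \<omega> = 0 \<or> lam (Suc k) \<omega> = 1" if "\<omega> \<in> space M" for \<omega>
    using lam_val[of "Suc k" \<omega>] that by auto
  have uv: "u (Suc k) \<omega> = 0 \<or> u (Suc k) \<omega> = 1" if "\<omega> \<in> space M" for \<omega>
    using u_val[of "Suc k" \<omega>] that by auto
  have pS0: "prob S0 = \<gamma>" using lam_dist[of "Suc k"] by (simp add: S0_def)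
  have pl1: "prob {\<omega>\<in>space M. lam (Suc k) \<omega> = 1} = 1 - \<gamma>"
  proof -
    have "{\<omega>\<in>space M. lam (Suc k) \<omega> = 1} = space M - S0" by (auto simp: S0_def dest: lv)
    thus ?thesis using prob_compl[OF S0s] pS0 by simp
  qed
  have pu0: "prob {\<omega>\<in>space M. u (Suc k) \<omega> = 0} = \<mu>" using u_dist[of "Suc k"] by simp
  have pu1: "prob {\<omega>\<in>space M. u (Suc k) \<omega> = 1} = 1 - \<mu>"
  proof -
    have e: "{\<omega>\<in>space M. u (Suc k) \<omega> = 1} = space M - {\<omega>\<in>space M. u (Suc k) \<omega> = 0}" by (auto dest: uv)
    have "{\<omega>\<in>space M. u (Suc k) \<omega> = 0} \<in> events" by measurable
    from prob_compl[OF this] show ?thesis unfolding e pu0 .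
  qed
  have Jv: "prob {\<omega>\<in>space M. lam (Suc k) \<omega> = 1 \<and> u (Suc k) \<omega> = v}
      = prob {\<omega>\<in>space M. lam (Suc k) \<omega> = 1} * prob {\<omega>\<in>space M. u (Suc k) \<omega> = v}" for v
  proof -
    define As where "As i = (case i of Inl _ \<Rightarrow> {1} | Inr _ \<Rightarrow> {v})" for i :: "nat + nat"
    have "prob (\<Inter>i\<in>{Inl (Suc k), Inr (Suc k)}. X i -` As i \<inter> space M)
        = (\<Prod>i\<in>{Inl (Suc k), Inr (Suc k)}. prob (X i -` As i \<inter> space M))"
      by (rule indep_varsD[OF ind]) (auto simp: I_def)
    moreover have "(\<Inter>i\<in>{Inl (Suc k), Inr (Suc k)}. X i -` As i \<inter> space M)
        = {\<omega>\<in>space M. lam (Suc k) \<omega> = 1 \<and> u (Suc k) \<omega> = v}"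
      by (auto simp: X_def As_def)
    moreover have "X (Inl (Suc k)) -` As (Inl (Suc k)) \<inter> space M = {\<omega>\<in>space M. lam (Suc k) \<omega> = 1}"
      by (auto simp: X_def As_def)
    moreover have "X (Inr (Suc k)) -` As (Inr (Suc k)) \<inter> space M = {\<omega>\<in>space M. u (Suc k) \<omega> = v}"
      by (auto simp: X_def As_def)
    ultimately show ?thesis by simp
  qed
  have pSa: "measure M Sa = (1-\<gamma>)*(1-\<mu>)" unfolding Sa_def using Jv[of 1] pl1 pu1 by simp
  have pSb: "measure M Sb = (1-\<gamma>)*\<mu>" unfolding Sb_def using Jv[of 0] pl1 pu0 by simp
  have blij: "bounded_linear (\<lambda>Y::real^'n^'n. Y $ i $ j)" for i j
    by (rule bounded_linear_compose[OF bounded_linear_vec_nth bounded_linear_vec_nth])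
  have key: "integral\<^sup>L M (\<lambda>\<omega>. indicator S0 \<omega> * (W \<omega> $ i $ j)) = \<gamma> * integral\<^sup>L M (\<lambda>\<omega>. W \<omega> $ i $ j)" for i j
  proof -
    have iv: "indep_var (PiM {Inl (Suc k)} (\<lambda>_. count_space UNIV)) (\<lambda>\<omega>. restrict (\<lambda>i. X i \<omega>) {Inl (Suc k)})
                (PiM L (\<lambda>_. count_space UNIV)) R"
      unfolding R_def by (rule indep_var_restrict[OF ind]) (auto simp: L_def I_def)
    have m1: "(\<lambda>h. of_bool (h (Inl (Suc k)) = 0) :: real) \<in> borel_measurable (PiM {Inl (Suc k)} (\<lambda>_. count_space (UNIV::nat set)))"
      by measurable
    have m2: "(\<lambda>h. (Lm A (G h) + Q) $ i $ j) \<in> borel_measurable (PiM L (\<lambda>_. count_space (UNIV::nat set)))"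
    proof -
      have ce: "(\<lambda>Y::real^'n^'n. Y $ i $ j) \<in> borel_measurable borel"
        by (rule borel_measurable_continuous_onI[OF linear_continuous_on[OF blij]])
      show ?thesis using measurable_compose[OF measurable_compose[OF Gm Lm_meas[of A Q]] ce] by simp
    qed
    have iv2: "indep_var borel ((\<lambda>h. of_bool (h (Inl (Suc k)) = 0) :: real) \<circ> (\<lambda>\<omega>. restrict (\<lambda>i. X i \<omega>) {Inl (Suc k)}))
                 borel ((\<lambda>h. (Lm A (G h) + Q) $ i $ j) \<circ> R)"
      by (rule indep_var_compose[OF iv m1 m2])
    have f1: "((\<lambda>h. of_bool (h (Inl (Suc k)) = 0) :: real) \<circ> (\<lambda>\<omega>. restrict (\<lambda>i. X i \<omega>) {Inl (Suc k)}))
        = (\<lambda>\<omega>. of_bool (lam (Suc k) \<omega> = 0))" by (simp add: fun_eq_iff X_def)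
    have f2: "((\<lambda>h. (Lm A (G h) + Q) $ i $ j) \<circ> R) = (\<lambda>\<omega>. W \<omega> $ i $ j)"
      by (simp add: fun_eq_iff W_def PkG)
    have iv3: "indep_var borel (\<lambda>\<omega>. of_bool (lam (Suc k) \<omega> = 0) :: real) borel (\<lambda>\<omega>. W \<omega> $ i $ j)"
      using iv2 unfolding f1 f2 .
    have int1: "integrable M (\<lambda>\<omega>. of_bool (lam (Suc k) \<omega> = 0) :: real)"
      by (rule integrable_const_bound[where B = 1]) auto
    have int2: "integrable M (\<lambda>\<omega>. W \<omega> $ i $ j)"
      by (rule integrable_bounded_linear[OF blij W_int])
    have "integral\<^sup>L M (\<lambda>\<omega>. indicator S0 \<omega> * (W \<omega> $ i $ j))
        = integral\<^sup>L M (\<lambda>\<omega>. of_bool (lam (Suc k) \<omega> = 0) * (W \<omega> $ i $ j))"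
      by (rule Bochner_Integration.integral_cong) (auto simp: S0_def indicator_def)
    also have "\<dots> = integral\<^sup>L M (\<lambda>\<omega>. of_bool (lam (Suc k) \<omega> = 0) :: real) * integral\<^sup>L M (\<lambda>\<omega>. W \<omega> $ i $ j)"
      by (rule indep_var_lebesgue_integral[OF iv3 int1 int2])
    also have "integral\<^sup>L M (\<lambda>\<omega>. of_bool (lam (Suc k) \<omega> = 0) :: real) = integral\<^sup>L M (indicator S0)"
      by (rule Bochner_Integration.integral_cong) (auto simp: S0_def indicator_def)
    also have "\<dots> = \<gamma>" using pS0 S0s by (simp add: Int_absorb2 sets.sets_into_space)
    finally show ?thesis .
  qed
  have SW: "integral\<^sup>L M (\<lambda>\<omega>. indicator S0 \<omega> *\<^sub>R W \<omega>) = \<gamma> *\<^sub>R integral\<^sup>L M W"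
  proof -
    have intSW: "integrable M (\<lambda>\<omega>. indicator S0 \<omega> *\<^sub>R W \<omega>)" by (rule integrable_mult_indicator[OF S0s W_int])
    have "integral\<^sup>L M (\<lambda>\<omega>. indicator S0 \<omega> *\<^sub>R W \<omega>) $ i $ j = (\<gamma> *\<^sub>R integral\<^sup>L M W) $ i $ j" for i j
    proof -
      have "integral\<^sup>L M (\<lambda>\<omega>. indicator S0 \<omega> *\<^sub>R W \<omega>) $ i $ j
          = integral\<^sup>L M (\<lambda>\<omega>. (indicator S0 \<omega> *\<^sub>R W \<omega>) $ i $ j)"
        using integral_bounded_linear[OF blij intSW] by simp
      also have "\<dots> = integral\<^sup>L M (\<lambda>\<omega>. indicator S0 \<omega> * (W \<omega> $ i $ j))" by simp
      also have "\<dots> = \<gamma> * integral\<^sup>L M (\<lambda>\<omega>. W \<omega> $ i $ j)" by (rule key)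
      also have "integral\<^sup>L M (\<lambda>\<omega>. W \<omega> $ i $ j) = integral\<^sup>L M W $ i $ j"
        using integral_bounded_linear[OF blij W_int] by simp
      finally show ?thesis by simp
    qed
    thus ?thesis by (simp add: Finite_Cartesian_Product.vec_eq_iff)
  qed
  show ?thesis using chain unfolding pSa pSb SW EW Pk_def by simp
qed




lemma conv_lemma:
  fixes A :: "real^'n^'n" and E :: "nat \<Rightarrow> real^'n^'n"
  assumes B: "\<And>k. norm (matpow A k) \<le> B" and g: "0 \<le> g" "g < 1"
    and rec: "\<And>k. E (Suc k) = c0 + g *\<^sub>R Lm A (E k)"
    and fx: "Xs = c0 + g *\<^sub>R Lm A Xs"
  shows "E \<longlonglongrightarrow> Xs"
proof -
  define D where "D k = E k - Xs" for k
  have DS: "D (Suc k) = g *\<^sub>R Lm A (D k)" for k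
  proof -
    have all: "\<forall>Y. Y = c0 + g *\<^sub>R Lm A Xs \<longrightarrow> E (Suc k) - Y = g *\<^sub>R (Lm A (E k) - Lm A Xs)"
      using rec[of k] by (simp add: algebra_simps)
    have "D (Suc k) = E (Suc k) - Xs" by (simp only: D_def)
    also have "\<dots> = g *\<^sub>R (Lm A (E k) - Lm A Xs)"
      by (rule mp[OF spec[OF all, of Xs] fx])
    also have "Lm A (E k) - Lm A Xs = Lm A (D k)"
      unfolding D_def by (rule linear_diff[OF Lm_linear, symmetric])
    finally show ?thesis .
  qed
  have Dk: "D k = g ^ k *\<^sub>R (matpow A k ** D 0 ** transpose (matpow A k))" for k
  proof -
    have "D k = ((\<lambda>X. g *\<^sub>R Lm A X) ^^ k) (D 0)" by (induct k) (simp_all add: DS)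
    thus ?thesis by (simp add: Lm_pow)
  qed
  let ?K = "real CARD('n) ^ 3" and ?T = "real CARD('n) ^ 2"
  have B0: "0 \<le> B" using order_trans[OF norm_ge_zero B[of 0]] .
  define C where "C = ?K * (?K * B * norm (D 0)) * (?T * B)"
  have tb: "norm (matpow A k ** D 0 ** transpose (matpow A k)) \<le> C" for k
  proof -
    have "norm (matpow A k ** D 0 ** transpose (matpow A k)) \<le> ?K * (norm (matpow A k ** D 0) * norm (transpose (matpow A k)))"
      by (rule norm_matmul_le)
    also have "\<dots> \<le> ?K * ((?K * (norm (matpow A k) * norm (D 0))) * (?T * norm (matpow A k)))"
      by (intro mult_left_mono mult_mono norm_matmul_le norm_transpose_le) auto
    also have "\<dots> \<le> ?K * ((?K * (B * norm (D 0))) * (?T * B))"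
      using B0 by (intro mult_left_mono mult_mono B) auto
    finally show ?thesis by (simp add: C_def mult_ac)
  qed
  have "D \<longlonglongrightarrow> 0"
  proof (rule Lim_null_comparison)
    show "\<forall>\<^sub>F k in sequentially. norm (D k) \<le> g ^ k * C"
    proof (intro always_eventually allI)
      fix k
      have "norm (D k) = g ^ k * norm (matpow A k ** D 0 ** transpose (matpow A k))"
        using g unfolding Dk[of k] by simp
      also have "\<dots> \<le> g ^ k * C" using g tb by (intro mult_left_mono) auto
      finally show "norm (D k) \<le> g ^ k * C" .
    qed
    show "(\<lambda>k. g ^ k * C) \<longlonglongrightarrow> 0"
      using g by (intro tendsto_mult_left_zero LIMSEQ_power_zero) auto
  qed
  thus ?thesis unfolding D_def by (rule LIM_zero_cancel)
qed

lemma fixpoint_lemma: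
  fixes A :: "real^'n^'n"
  assumes W: "W = Pb + g *\<^sub>R Lm A W" and S: "S = Q + g *\<^sub>R Lm A S" and H: "H = Pn + g *\<^sub>R Lm A H"
  shows "a *\<^sub>R W + g *\<^sub>R S + b *\<^sub>R H = (a *\<^sub>R Pb + b *\<^sub>R Pn + g *\<^sub>R Q) + g *\<^sub>R Lm A (a *\<^sub>R W + g *\<^sub>R S + b *\<^sub>R H)"
proof -
  have "a *\<^sub>R W + g *\<^sub>R S + b *\<^sub>R H = a *\<^sub>R (Pb + g *\<^sub>R Lm A W) + g *\<^sub>R (Q + g *\<^sub>R Lm A S) + b *\<^sub>R (Pn + g *\<^sub>R Lm A H)"
    using W S H by simp
  also have "\<dots> = (a *\<^sub>R Pb + b *\<^sub>R Pn + g *\<^sub>R Q) + g *\<^sub>R Lm A (a *\<^sub>R W + g *\<^sub>R S + b *\<^sub>R H)"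
    by (simp add: Lm_add Lm_scaleR algebra_simps)
  finally show ?thesis .
qed


theorem lemma3:
  fixes A Q Pbar P0 :: "real^'n^'n"
    and C :: "real^'n^'m"
    and R :: "real^'m^'m"
    and \<gamma> \<mu> :: real
    and M :: "'a measure"
    and lam u :: "nat \<Rightarrow> 'a \<Rightarrow> nat"
  assumes rho: "spectral_radius A < 1"
    and Q_pd: "pos_def Q" and R_pd: "pos_def R"
    and obs: "observable A C"
    and ctrb: "controllable A (mat_sqrt Q)"
    and Pbar_pd: "pos_def Pbar"
    and Pbar_dare: "Pbar = riccati A C Q R Pbar"
    and Pbar_stab: "spectral_radius (A ** (mat 1 - kgain A C Q R Pbar ** C)) < 1"
    and \<gamma>: "0 < \<gamma>" "\<gamma> < 1"
    and \<mu>: "0 < \<mu>" "\<mu> < 1"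
    and P: "prob_space M"
    and lam_rv: "\<And>k. k \<ge> 1 \<Longrightarrow> lam k \<in> measurable M (count_space UNIV)"
    and u_rv: "\<And>k. k \<ge> 1 \<Longrightarrow> u k \<in> measurable M (count_space UNIV)"
    and lam_val: "\<And>k \<omega>. k \<ge> 1 \<Longrightarrow> \<omega> \<in> space M \<Longrightarrow> lam k \<omega> \<in> {0, 1}"
    and u_val: "\<And>k \<omega>. k \<ge> 1 \<Longrightarrow> \<omega> \<in> space M \<Longrightarrow> u k \<omega> \<in> {0, 1}"
    and lam_dist: "\<And>k. k \<ge> 1 \<Longrightarrow> measure M {\<omega> \<in> space M. lam k \<omega> = 0} = \<gamma>"
    and u_dist: "\<And>k. k \<ge> 1 \<Longrightarrow> measure M {\<omega> \<in> space M. u k \<omega> = 0} = \<mu>"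
    and indep: "prob_space.indep_vars M (\<lambda>_. count_space UNIV)
                  (\<lambda>i. case i of Inl k \<Rightarrow> lam k | Inr k \<Rightarrow> u k)
                  ({Inl k | k. k \<ge> 1} \<union> {Inr k | k. k \<ge> 1})"
    and P0_psd: "pos_semidef P0"
  shows "(\<lambda>k. integral\<^sup>L M (\<lambda>\<omega>. eav_cov A Q Pbar (lyap A Q + Pbar) P0
                   (\<lambda>j. lam j \<omega>) (\<lambda>j. u j \<omega>) k))
         \<longlonglongrightarrow> ((1 - \<gamma>) * (1 - \<mu>)) *\<^sub>R lyap (sqrt \<gamma> *\<^sub>R A) Pbar
             + \<gamma> *\<^sub>R lyap (sqrt \<gamma> *\<^sub>R A) Q
             + ((1 - \<gamma>) * \<mu>) *\<^sub>R lyap (sqrt \<gamma> *\<^sub>R A) (lyap A Q + Pbar)"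
proof -
  obtain c where c: "\<And>k i j. \<bar>matpow A k $ i $ j\<bar> \<le> c" using matpow_entry_bound[OF rho] by blast
  define B where "B = real CARD('n) * real CARD('n) * c"
  have Bk: "norm (matpow A k) \<le> B" for k
    unfolding B_def by (rule norm_mat_entry_bound) (rule c)
  have g: "0 \<le> \<gamma>" "\<gamma> < 1" using \<gamma> by auto
  define Pn where "Pn = lyap A Q + Pbar"
  define E where "E k = integral\<^sup>L M (\<lambda>\<omega>. eav_cov A Q Pbar Pn P0 (\<lambda>j. lam j \<omega>) (\<lambda>j. u j \<omega>) k)" for k
  define c0 where "c0 = ((1-\<gamma>)*(1-\<mu>)) *\<^sub>R Pbar + ((1-\<gamma>)*\<mu>) *\<^sub>R Pn + \<gamma> *\<^sub>R Q"
  have rec: "E (Suc k) = c0 + \<gamma> *\<^sub>R Lm A (E k)" for k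
  proof -
    have "E (Suc k) = ((1-\<gamma>)*(1-\<mu>)) *\<^sub>R Pbar + ((1-\<gamma>)*\<mu>) *\<^sub>R Pn + \<gamma> *\<^sub>R (Lm A (E k) + Q)"
      unfolding E_def
      by (rule exp_step[OF P lam_rv u_rv lam_val u_val lam_dist u_dist indep])
    thus ?thesis unfolding c0_def by (simp add: algebra_simps)
  qed
  define W where "W = lyap (sqrt \<gamma> *\<^sub>R A) Pbar"
  define S where "S = lyap (sqrt \<gamma> *\<^sub>R A) Q"
  define H where "H = lyap (sqrt \<gamma> *\<^sub>R A) Pn"
  have fx: "((1-\<gamma>)*(1-\<mu>)) *\<^sub>R W + \<gamma> *\<^sub>R S + ((1-\<gamma>)*\<mu>) *\<^sub>R H
     = c0 + \<gamma> *\<^sub>R Lm A (((1-\<gamma>)*(1-\<mu>)) *\<^sub>R W + \<gamma> *\<^sub>R S + ((1-\<gamma>)*\<mu>) *\<^sub>R H)"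
    unfolding c0_def
    by (rule fixpoint_lemma; unfold W_def S_def H_def; rule lyap_facts(2)[OF Bk g])
  have "E \<longlonglongrightarrow> ((1-\<gamma>)*(1-\<mu>)) *\<^sub>R W + \<gamma> *\<^sub>R S + ((1-\<gamma>)*\<mu>) *\<^sub>R H"
    using conv_lemma[OF Bk g, where E=E] rec fx by blast
  thus ?thesis unfolding E_def W_def S_def H_def Pn_def .
qed

end
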